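(* Let $n\ge1$, $k\ge2$, $0<\rho<1$, and $m\in\{j/2^n:0\le j\le2^n\}$. Let $Y^1,\dots,Y^k\in\{0,1\}^n$ be $\rho$-correlated uniform binary strings. Then among all Boolean functions $f:\{0,1\}^n\to\{0,1\}$ with $\mathbb{E} f=m$, the agreement probability $\mathbb{P}(f(Y^1)=\cdots=f(Y^k))$ is maximized by some monotone function.
   Context: $\{0,1\}^n$ carries the uniform measure. $Y^1,\dots,Y^k$ are $\rho$-correlated if $Y^i=X+Z^i$ (mod 2 coordinatewise), where $X$ is uniform on $\{0,1\}^n$ and $Z^1,\dots,Z^k$ are independent of each other and of $X$, each with i.i.d. Bernoulli($\epsilon$) coordinates, $\epsilon=(1-\sqrt\rho)/2$. A function $f$ is monotone if $f(x)\le f(y)$ whenever $x_i\le y_i$ for all $i$. *)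

theory Defs
  imports Complex_Main "HOL-Library.FuncSet"
begin

text \<open>The Boolean cube \<open>{0,1}^n\<close>, represented as boolean lists of length n
  (True = 1, False = 0).\<close>
definition cube :: "nat \<Rightarrow> bool list set" where
  "cube n = {xs. length xs = n}"

definition xorv :: "bool list \<Rightarrow> bool list \<Rightarrow> bool list" where
  "xorv x z = map2 (\<noteq>) x z"

definition noise_weight :: "real \<Rightarrow> bool list \<Rightarrow> real" where
  "noise_weight eps z = prod_list (map (\<lambda>b. if b then eps else 1 - eps) z)"

definition cube_mean :: "nat \<Rightarrow> (bool list \<Rightarrow> bool) \<Rightarrow> real" where
  "cube_mean n f = (\<Sum>x\<in>cube n. (if f x then 1 else 0)) / 2 ^ n"

text \<open>\<open>P(f(Y^1) = ... = f(Y^k))\<close> for rho-correlated Y^i = X + Z^i,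
  X uniform, Z^1..Z^k independent with Bernoulli((1 - sqrt rho)/2) coordinates.\<close>
definition agree_prob :: "nat \<Rightarrow> nat \<Rightarrow> real \<Rightarrow> (bool list \<Rightarrow> bool) \<Rightarrow> real" where
  "agree_prob n k rho f =
     (let eps = (1 - sqrt rho) / 2 in
      \<Sum>x\<in>cube n. \<Sum>Z\<in>(PiE {..<k} (\<lambda>_. cube n)).
        (1 / 2 ^ n) * (\<Prod>i<k. noise_weight eps (Z i)) *
        (if (\<forall>i<k. \<forall>j<k. f (xorv x (Z i)) = f (xorv x (Z j))) then 1 else 0))"

definition monotone_cube :: "nat \<Rightarrow> (bool list \<Rightarrow> bool) \<Rightarrow> bool" where
  "monotone_cube n f \<longleftrightarrow>
     (\<forall>x\<in>cube n. \<forall>y\<in>cube n. (\<forall>i<n. x ! i \<le> y ! i) \<longrightarrow> f x \<le> f y)"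

end

theory Submission
  imports Defs
begin


lemma cube_finite: "finite (cube n)"
proof -
  have "cube n = {xs. set xs \<subseteq> (UNIV::bool set) \<and> length xs = n}" by (auto simp: cube_def)
  thus ?thesis using finite_lists_length_eq[of "UNIV::bool set" n] by simp
qed

lemma cube_card: "card (cube n) = 2 ^ n"
proof -
  have "cube n = {xs. set xs \<subseteq> (UNIV::bool set) \<and> length xs = n}" by (auto simp: cube_def)
  thus ?thesis using card_lists_length_eq[of "UNIV::bool set" n] by simp
qed

definition shift :: "nat \<Rightarrow> (bool list \<Rightarrow> bool) \<Rightarrow> bool list \<Rightarrow> bool" where
  "shift i f x = (if x ! i then f (x[i:=False]) \<or> f (x[i:=True]) else f (x[i:=False]) \<and> f (x[i:=True]))"

definition mono_dir :: "nat \<Rightarrow> nat \<Rightarrow> (bool list \<Rightarrow> bool) \<Rightarrow> bool" where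
  "mono_dir n i f \<longleftrightarrow> (\<forall>x\<in>cube n. f (x[i:=False]) \<le> f (x[i:=True]))"

lemma ind_sum_pair:
  assumes "i < n" "x \<in> cube n"
  shows "(if shift i f x then 1 else 0) + (if shift i f (x[i := \<not> x!i]) then 1 else 0)
       = (if f x then 1 else 0) + (if f (x[i := \<not> x!i]) then (1::real) else 0)"
proof -
  have l: "i < length x" using assms by (simp add: cube_def)
  show ?thesis
  proof (cases "x!i")
    case True
    hence "x = x[i:=True]" using l by (metis list_update_id)
    thus ?thesis using True l unfolding shift_def by (auto simp: nth_list_update)
  next
    case False
    hence "x = x[i:=False]" using l by (metis list_update_id)
    thus ?thesis using False l unfolding shift_def by (auto simp: nth_list_update)
  qed
qed

lemma flip_bij: "i < n \<Longrightarrow> bij_betw (\<lambda>x. x[i := \<not> x!i]) (cube n) (cube n)"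
  by (rule bij_betw_byWitness[where f'="\<lambda>x. x[i := \<not> x!i]"]) (auto simp: cube_def nth_list_update)

lemma shift_mean:
  assumes "i < n"
  shows "cube_mean n (shift i f) = cube_mean n f"
proof -
  let ?s = "\<lambda>x. x[i := \<not> x!i]"
  have r: "\<And>g::bool list \<Rightarrow> real. (\<Sum>x\<in>cube n. g (?s x)) = (\<Sum>x\<in>cube n. g x)"
    using sum.reindex_bij_betw[OF flip_bij[OF assms]] by blast
  have "2 * (\<Sum>x\<in>cube n. (if shift i f x then 1 else 0::real))
     = (\<Sum>x\<in>cube n. (if shift i f x then 1 else 0)) + (\<Sum>x\<in>cube n. (if shift i f (?s x) then 1 else 0))"
    using r[of "\<lambda>x. if shift i f x then 1 else 0"] by simp
  also have "\<dots> = (\<Sum>x\<in>cube n. (if f x then 1 else 0) + (if f (?s x) then 1 else 0))"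
    unfolding sum.distrib[symmetric] by (rule sum.cong) (use ind_sum_pair[OF assms] in auto)
  also have "\<dots> = 2 * (\<Sum>x\<in>cube n. (if f x then 1 else 0::real))"
    unfolding sum.distrib using r[of "\<lambda>x. if f x then 1 else 0"] by simp
  finally show ?thesis unfolding cube_mean_def by simp
qed

lemma mono_dir_shift_same: "i < n \<Longrightarrow> mono_dir n i (shift i f)"
  unfolding mono_dir_def shift_def by (auto simp: cube_def)

lemma mono_dir_shift_other:
  assumes "i < n" "j < n" "j \<noteq> i" "mono_dir n j f"
  shows "mono_dir n j (shift i f)"
  unfolding mono_dir_def
proof
  fix x assume x: "x \<in> cube n"
  have c: "\<And>b. x[i:=b] \<in> cube n" using x by (simp add: cube_def)
  have m: "\<And>b. f (x[i:=b, j:=False]) \<le> f (x[i:=b, j:=True])"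
    using assms(4) c unfolding mono_dir_def by blast
  have sw: "\<And>b c. x[j:=c, i:=b] = x[i:=b, j:=c]" using assms(3) by (simp add: list_update_swap)
  show "shift i f (x[j := False]) \<le> shift i f (x[j := True])"
    unfolding shift_def using m[of False] m[of True] assms(3) by (auto simp: sw nth_list_update)
qed

lemma mono_dirs_imp:
  assumes "\<forall>i<n. mono_dir n i f"
  shows "monotone_cube n f"
proof -
  have H: "\<forall>x\<in>cube n. \<forall>y\<in>cube n. (\<forall>i<n. x ! i \<le> y ! i) \<longrightarrow> (\<forall>i. t \<le> i \<and> i < n \<longrightarrow> x!i = y!i) \<longrightarrow> f x \<le> f y" for t
  proof (induction t)
    case 0
    show ?case
    proof (intro ballI impI)
      fix x y assume "x \<in> cube n" "y \<in> cube n" "\<forall>i. 0 \<le> i \<and> i < n \<longrightarrow> x ! i = y ! i"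
      hence "x = y" by (intro nth_equalityI) (auto simp: cube_def)
      thus "f x \<le> f y" by simp
    qed
  next
    case (Suc t)
    show ?case
    proof (intro ballI impI)
      fix x y assume x: "x \<in> cube n" and y: "y \<in> cube n" and le: "\<forall>i<n. x ! i \<le> y ! i"
        and eq: "\<forall>i. Suc t \<le> i \<and> i < n \<longrightarrow> x ! i = y ! i"
      show "f x \<le> f y"
      proof (cases "t < n")
        case False
        hence "\<forall>i. t \<le> i \<and> i < n \<longrightarrow> x ! i = y ! i" using eq by auto
        thus ?thesis apply - apply (rule Suc.IH[rule_format]) using x y le by blast+
      next
        case True
        let ?y = "y[t := x!t]"
        have y': "?y \<in> cube n" using y by (simp add: cube_def)
        have "f x \<le> f ?y"
          proof -
          have a: "\<forall>i<n. x ! i \<le> ?y ! i" using le y True by (auto simp: cube_def nth_list_update split: if_splits)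
          have b: "\<forall>i. t \<le> i \<and> i < n \<longrightarrow> x ! i = ?y ! i" using eq y True
            by (auto simp: nth_list_update cube_def)
          show ?thesis apply (rule Suc.IH[rule_format])
            using x y' a b apply -
            apply assumption apply assumption apply blast apply blast done
        qed
        moreover have "f ?y \<le> f y"
        proof (cases "x!t = y!t")
          case True thus ?thesis by simp
        next
          case False
          hence "x!t = False" "y!t = True" using le \<open>t<n\<close> by auto
          have e1: "?y = y[t:=False]" using \<open>x!t = False\<close> by simp
          have e2: "y[t:=True] = y" using \<open>y!t = True\<close> list_update_id[of y t] by simp
          have md: "mono_dir n t f" using assms True by blast
          have "f (y[t:=False]) \<le> f (y[t:=True])" using md y unfolding mono_dir_def by (rule bspec)
          thus ?thesis using e1 e2 by simp
        qed
        ultimately show ?thesis by (rule order_trans)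
      qed
    qed
  qed
  show ?thesis unfolding monotone_cube_def
  proof (intro ballI impI)
    fix x y assume x: "x \<in> cube n" and y: "y \<in> cube n" and le: "\<forall>i<n. x ! i \<le> y ! i"
    show "f x \<le> f y" apply (rule H[of n, rule_format]) using x y le by auto
  qed
qed



lemma pair_prod_ineq:
  fixes x y :: "'a \<Rightarrow> real"
  assumes "finite L" "\<And>l. l \<in> L \<Longrightarrow> 0 \<le> x l" "\<And>l. l \<in> L \<Longrightarrow> 0 \<le> y l"
  shows "(\<Prod>l\<in>L. x l) + (\<Prod>l\<in>L. y l) \<le> (\<Prod>l\<in>L. max (x l) (y l)) + (\<Prod>l\<in>L. min (x l) (y l))"
  using assms
proof (induction L rule: finite_induct)
  case empty
  then show ?case by simp
next
  case (insert a L)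
  define X where "X = (\<Prod>l\<in>L. x l)"
  define Y where "Y = (\<Prod>l\<in>L. y l)"
  define M where "M = (\<Prod>l\<in>L. max (x l) (y l))"
  define m where "m = (\<Prod>l\<in>L. min (x l) (y l))"
  have IH: "X + Y \<le> M + m" using insert unfolding X_def Y_def M_def m_def by auto
  have XM: "X \<le> M" unfolding X_def M_def by (rule prod_mono) (use insert in auto)
  have YM: "Y \<le> M" unfolding Y_def M_def by (rule prod_mono) (use insert in auto)
  have mX: "m \<le> X" unfolding X_def m_def by (rule prod_mono) (use insert in auto)
  have mY: "m \<le> Y" unfolding Y_def m_def by (rule prod_mono) (use insert in auto)
  have xa: "0 \<le> x a" and ya: "0 \<le> y a" using insert by auto
  have "x a * X + y a * Y \<le> max (x a) (y a) * M + min (x a) (y a) * m"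
  proof (cases "y a \<le> x a")
    case True
    have 1: "y a * (Y - m) \<le> x a * (Y - m)" using True mY by (intro mult_right_mono) auto
    have 2: "0 \<le> x a * (M + m - X - Y)" using xa IH by simp
    have "max (x a) (y a) = x a" "min (x a) (y a) = y a" using True by auto
    thus ?thesis using 1 2 by (simp add: algebra_simps)
  next
    case False
    have 1: "x a * (X - m) \<le> y a * (X - m)" using False mX by (intro mult_right_mono) auto
    have 2: "0 \<le> y a * (M + m - X - Y)" using ya IH by simp
    have "max (x a) (y a) = y a" "min (x a) (y a) = x a" using False by auto
    thus ?thesis using 1 2 by (simp add: algebra_simps)
  qed
  thus ?case using insert unfolding X_def Y_def M_def m_def by simp
qed

definition wt :: "real \<Rightarrow> bool \<Rightarrow> real" where "wt e b = (if b then e else 1 - e)"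

definition Aval :: "real \<Rightarrow> (bool \<Rightarrow> bool) \<Rightarrow> bool \<Rightarrow> bool \<Rightarrow> real" where
  "Aval e h a c = (\<Sum>\<beta>\<in>UNIV. wt e \<beta> * (if h (a \<noteq> \<beta>) = c then 1 else 0))"

definition mon :: "(bool \<Rightarrow> bool) \<Rightarrow> bool \<Rightarrow> bool" where
  "mon h \<beta> = (if \<beta> then h False \<or> h True else h False \<and> h True)"

lemma Aval_simp: "Aval e h a c = (1 - e) * (if h a = c then 1 else 0) + e * (if h (\<not> a) = c then 1 else 0)"
  unfolding Aval_def wt_def by (simp add: UNIV_bool)

lemma Aval_nonneg: "0 \<le> e \<Longrightarrow> e \<le> 1 \<Longrightarrow> 0 \<le> Aval e h a c"
  unfolding Aval_simp by simp

lemma Aval_mon: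
  assumes "0 \<le> e" "e \<le> 1/2"
  shows "Aval e (mon h) False True = min (Aval e h False True) (Aval e h True True)"
    and "Aval e (mon h) True True = max (Aval e h False True) (Aval e h True True)"
    and "Aval e (mon h) False False = max (Aval e h False False) (Aval e h True False)"
    and "Aval e (mon h) True False = min (Aval e h False False) (Aval e h True False)"
  using assms unfolding Aval_simp mon_def
  by (cases "h False"; cases "h True"; simp)+

lemma core_ineq:
  fixes h :: "nat \<Rightarrow> bool \<Rightarrow> bool"
  assumes "0 \<le> e" "e \<le> 1/2"
  shows "(\<Sum>a\<in>UNIV. \<Sum>c\<in>UNIV. \<Prod>l<k. Aval e (h l) a c)
       \<le> (\<Sum>a\<in>UNIV. \<Sum>c\<in>UNIV. \<Prod>l<k. Aval e (mon (h l)) a c)"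
proof -
  have nn: "\<And>l a c. 0 \<le> Aval e (h l) a c" using assms by (intro Aval_nonneg) auto
  have T: "(\<Prod>l<k. Aval e (h l) False True) + (\<Prod>l<k. Aval e (h l) True True)
     \<le> (\<Prod>l<k. Aval e (mon (h l)) False True) + (\<Prod>l<k. Aval e (mon (h l)) True True)"
    using pair_prod_ineq[of "{..<k}" "\<lambda>l. Aval e (h l) False True" "\<lambda>l. Aval e (h l) True True"] nn
    by (simp add: Aval_mon[OF assms] add.commute)
  have F: "(\<Prod>l<k. Aval e (h l) False False) + (\<Prod>l<k. Aval e (h l) True False)
     \<le> (\<Prod>l<k. Aval e (mon (h l)) False False) + (\<Prod>l<k. Aval e (mon (h l)) True False)"
    using pair_prod_ineq[of "{..<k}" "\<lambda>l. Aval e (h l) False False" "\<lambda>l. Aval e (h l) True False"] nn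
    by (simp add: Aval_mon[OF assms])
  show ?thesis using T F by (simp add: UNIV_bool)
qed



definition nwo :: "real \<Rightarrow> nat \<Rightarrow> bool list \<Rightarrow> real" where
  "nwo e i z = prod_list (map (wt e) (take i z)) * prod_list (map (wt e) (drop (Suc i) z))"

lemma nw_wt: "noise_weight e z = prod_list (map (wt e) z)"
  unfolding noise_weight_def wt_def by simp

lemma nw_upd: "i < length z \<Longrightarrow> noise_weight e (z[i:=b]) = wt e b * nwo e i z"
  unfolding nw_wt nwo_def by (simp add: upd_conv_take_nth_drop)

lemma nwo_nonneg: "0 \<le> e \<Longrightarrow> e \<le> 1 \<Longrightarrow> 0 \<le> nwo e i z"
  unfolding nwo_def by (intro mult_nonneg_nonneg prod_list_nonneg) (auto simp: wt_def)

lemma xorv_upd: "length x = length z \<Longrightarrow> i < length x \<Longrightarrow>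
   xorv (x[i:=a]) (z[i:=b]) = (xorv x z)[i := (a \<noteq> b)]"
  unfolding xorv_def by (rule nth_equalityI) (auto simp: nth_list_update)

lemma xorv_cube: "x \<in> cube n \<Longrightarrow> z \<in> cube n \<Longrightarrow> xorv x z \<in> cube n"
  unfolding xorv_def cube_def by simp

lemma prod_ind: fixes v :: "nat \<Rightarrow> bool" shows "(\<Prod>l<k. (if v l = c then 1 else 0::real)) = (if \<forall>l<k. v l = c then 1 else 0)"
proof (cases "\<forall>l<k. v l = c")
  case True thus ?thesis by simp
next
  case False
  then obtain l0 where "l0 < k" "v l0 \<noteq> c" by auto
  hence "(\<Prod>l<k. (if v l = c then 1 else 0::real)) = 0" by (intro prod_zero) auto
  thus ?thesis using False by simp
qed

lemma sum_bool_UNIV: "(\<Sum>c\<in>UNIV. g c) = g False + (g True :: real)"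
  by (simp add: UNIV_bool)

lemma ind_sum:
  fixes v :: "nat \<Rightarrow> bool"
  assumes "1 \<le> k"
  shows "(if \<forall>l<k. \<forall>l'<k. v l = v l' then 1 else 0::real) = (\<Sum>c\<in>UNIV. \<Prod>l<k. (if v l = c then 1 else 0))"
proof -
  have E: "(\<Sum>c\<in>UNIV. \<Prod>l<k. (if v l = c then 1 else 0::real))
      = (if \<forall>l<k. v l = True then 1 else 0) + (if \<forall>l<k. v l = False then 1 else 0)"
    unfolding sum_bool_UNIV prod_ind[of v True] prod_ind[of v False] by (rule add.commute)
  have k0: "0 < k" using assms by simp
  have CAB: "(\<forall>l<k. \<forall>l'<k. v l = v l') \<longleftrightarrow> (\<forall>l<k. v l = True) \<or> (\<forall>l<k. v l = False)"
  proof
    assume C: "\<forall>l<k. \<forall>l'<k. v l = v l'"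
    show "(\<forall>l<k. v l = True) \<or> (\<forall>l<k. v l = False)"
    proof (cases "v 0")
      case True thus ?thesis using C k0 by blast
    next
      case False thus ?thesis using C k0 by blast
    qed
  next
    assume "(\<forall>l<k. v l = True) \<or> (\<forall>l<k. v l = False)"
    thus "\<forall>l<k. \<forall>l'<k. v l = v l'" by blast
  qed
  have nAB: "\<not> ((\<forall>l<k. v l = True) \<and> (\<forall>l<k. v l = False))" using k0 by blast
  show ?thesis unfolding E CAB using nAB
    by (cases "\<forall>l<k. v l = True"; cases "\<forall>l<k. v l = False") (simp only: if_True if_False; simp)+
qed

lemma orbit_avg:
  fixes F :: "'s \<Rightarrow> real"
  assumes "finite G" "\<And>g. g \<in> G \<Longrightarrow> bij_betw (\<phi> g) D D"
  shows "real (card G) * (\<Sum>s\<in>D. F s) = (\<Sum>s\<in>D. \<Sum>g\<in>G. F (\<phi> g s))"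
proof -
  have "(\<Sum>s\<in>D. \<Sum>g\<in>G. F (\<phi> g s)) = (\<Sum>g\<in>G. \<Sum>s\<in>D. F (\<phi> g s))" by (rule sum.swap)
  also have "\<dots> = (\<Sum>g\<in>G. \<Sum>s\<in>D. F s)"
    by (rule sum.cong[OF refl]) (use sum.reindex_bij_betw[OF assms(2)] in blast)
  finally show ?thesis by simp
qed



definition Ft :: "nat \<Rightarrow> nat \<Rightarrow> real \<Rightarrow> (bool list \<Rightarrow> bool) \<Rightarrow> bool list \<times> (nat \<Rightarrow> bool list) \<Rightarrow> real" where
  "Ft n k e f s = (1 / 2 ^ n) * (\<Prod>i<k. noise_weight e (snd s i)) *
     (if \<forall>i<k. \<forall>j<k. f (xorv (fst s) (snd s i)) = f (xorv (fst s) (snd s j)) then 1 else 0)"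

definition DD :: "nat \<Rightarrow> nat \<Rightarrow> (bool list \<times> (nat \<Rightarrow> bool list)) set" where
  "DD n k = cube n \<times> PiE {..<k} (\<lambda>_. cube n)"

definition GG :: "nat \<Rightarrow> (bool \<times> (nat \<Rightarrow> bool)) set" where
  "GG k = (UNIV::bool set) \<times> PiE {..<k} (\<lambda>_. UNIV::bool set)"

definition phi :: "nat \<Rightarrow> nat \<Rightarrow> bool \<times> (nat \<Rightarrow> bool) \<Rightarrow> bool list \<times> (nat \<Rightarrow> bool list) \<Rightarrow> bool list \<times> (nat \<Rightarrow> bool list)" where
  "phi i k g s = ((fst s)[i := (fst s ! i \<noteq> fst g)], restrict (\<lambda>l. (snd s l)[i := (snd s l ! i \<noteq> snd g l)]) {..<k})"

definition st :: "nat \<Rightarrow> nat \<Rightarrow> bool \<times> (nat \<Rightarrow> bool) \<Rightarrow> bool list \<times> (nat \<Rightarrow> bool list) \<Rightarrow> bool list \<times> (nat \<Rightarrow> bool list)" where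
  "st i k g s = ((fst s)[i := fst g], restrict (\<lambda>l. (snd s l)[i := snd g l]) {..<k})"

definition psi :: "nat \<Rightarrow> nat \<Rightarrow> bool list \<times> (nat \<Rightarrow> bool list) \<Rightarrow> bool \<times> (nat \<Rightarrow> bool) \<Rightarrow> bool \<times> (nat \<Rightarrow> bool)" where
  "psi i k s g = (fst s ! i \<noteq> fst g, restrict (\<lambda>l. snd s l ! i \<noteq> snd g l) {..<k})"

lemma bool_cancel: "(((p::bool) = (\<not> b)) = (\<not> b)) = p" by auto

lemma agree_Ft: "agree_prob n k rho f = (\<Sum>s\<in>DD n k. Ft n k ((1 - sqrt rho) / 2) f s)"
  unfolding agree_prob_def Let_def Ft_def DD_def sum.cartesian_product by (simp add: case_prod_beta)

lemma DD_finite: "finite (DD n k)"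
  unfolding DD_def by (intro finite_cartesian_product finite_PiE cube_finite) auto

lemma GG_finite: "finite (GG k)"
  unfolding GG_def by (intro finite_cartesian_product finite_PiE) auto

lemma GG_card_pos: "0 < card (GG k)"
proof -
  have "(False, restrict (\<lambda>_. False) {..<k}) \<in> GG k" unfolding GG_def by auto
  thus ?thesis using GG_finite card_gt_0_iff by blast
qed

lemma phi_in: assumes "s \<in> DD n k" shows "phi i k g s \<in> DD n k"
proof -
  obtain x Z where s: "s = (x, Z)" by (cases s)
  have x: "x \<in> cube n" and Z: "Z \<in> PiE {..<k} (\<lambda>_. cube n)" using assms s unfolding DD_def by auto
  have Z': "Z \<in> Pi {..<k} (\<lambda>_. cube n)" using PiE_mem[OF Z] by (simp add: Pi_iff)
  have "(\<lambda>l. (Z l)[i := (Z l ! i \<noteq> snd g l)]) \<in> Pi {..<k} (\<lambda>_. cube n)"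
    using Z' unfolding Pi_iff cube_def by simp
  hence "restrict (\<lambda>l. (Z l)[i := (Z l ! i \<noteq> snd g l)]) {..<k} \<in> PiE {..<k} (\<lambda>_. cube n)"
    by (simp only: restrict_PiE)
  moreover have "x[i := (x ! i \<noteq> fst g)] \<in> cube n" using x unfolding cube_def by simp
  ultimately show ?thesis unfolding s phi_def DD_def fst_conv snd_conv by blast
qed

lemma phi_inv: assumes "s \<in> DD n k" "i < n" shows "phi i k g (phi i k g s) = s"
proof -
  obtain x Z where s: "s = (x, Z)" by (cases s)
  have x: "length x = n" and Z: "Z \<in> PiE {..<k} (\<lambda>_. cube n)" using assms s unfolding DD_def cube_def by auto
  have Zl: "\<And>l. l < k \<Longrightarrow> length (Z l) = n" using Z unfolding cube_def by (auto simp: PiE_iff)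
  have 1: "x[i := (x ! i \<noteq> fst g), i := (x[i := (x ! i \<noteq> fst g)] ! i \<noteq> fst g)] = x"
    unfolding list_update_overwrite
  proof -
    have v: "(x[i := (x ! i \<noteq> fst g)] ! i \<noteq> fst g) = x!i" using x assms(2) by auto
    show "x[i := (x[i := (x ! i \<noteq> fst g)] ! i \<noteq> fst g)] = x" unfolding v by simp
  qed
  have 2: "restrict (\<lambda>l. (restrict (\<lambda>l. (Z l)[i := (Z l ! i \<noteq> snd g l)]) {..<k} l)[i :=
           (restrict (\<lambda>l. (Z l)[i := (Z l ! i \<noteq> snd g l)]) {..<k} l ! i \<noteq> snd g l)]) {..<k}
          = restrict Z {..<k}"
    by (rule restrict_ext) (use Zl assms(2) in \<open>simp add: bool_cancel\<close>)
  show ?thesis unfolding s phi_def fst_conv snd_conv 1 2 PiE_restrict[OF Z] by (rule refl)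
qed

lemma phi_bij: "i < n \<Longrightarrow> bij_betw (phi i k g) (DD n k) (DD n k)"
proof (rule bij_betw_byWitness[where f'="phi i k g"])
  assume "i < n"
  show "\<forall>a\<in>DD n k. phi i k g (phi i k g a) = a" using phi_inv \<open>i < n\<close> by blast
  show "\<forall>a\<in>DD n k. phi i k g (phi i k g a) = a" using phi_inv \<open>i < n\<close> by blast
  show "phi i k g ` DD n k \<subseteq> DD n k" using phi_in by blast
  show "phi i k g ` DD n k \<subseteq> DD n k" using phi_in by blast
qed

lemma psi_inv: assumes "g \<in> GG k" shows "psi i k s (psi i k s g) = g"
proof -
  obtain a B where g: "g = (a, B)" by (cases g)
  have B: "B \<in> PiE {..<k} (\<lambda>_. UNIV)" using assms g unfolding GG_def by auto
  have "restrict (\<lambda>l. snd s l ! i \<noteq> restrict (\<lambda>l. snd s l ! i \<noteq> B l) {..<k} l) {..<k} = restrict B {..<k}"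
    by (rule restrict_ext) auto
  moreover have "(fst s ! i \<noteq> (fst s ! i \<noteq> a)) = a" by auto
  ultimately show ?thesis unfolding g psi_def using B by simp
qed

lemma psi_in: "psi i k s g \<in> GG k"
  unfolding GG_def psi_def by auto

lemma psi_bij: "bij_betw (psi i k s) (GG k) (GG k)"
  by (rule bij_betw_byWitness[where f'="psi i k s"]) (auto simp: psi_inv psi_in)

lemma phi_st: assumes "s \<in> DD n k" shows "phi i k g s = st i k (psi i k s g) s"
proof -
  have "restrict (\<lambda>l. (snd s l)[i := (snd s l ! i \<noteq> snd g l)]) {..<k}
      = restrict (\<lambda>l. (snd s l)[i := restrict (\<lambda>l. snd s l ! i \<noteq> snd g l) {..<k} l]) {..<k}"
    by (rule restrict_ext) simp
  thus ?thesis unfolding phi_def st_def psi_def by simp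
qed

lemma orbit_reindex:
  assumes "s \<in> DD n k"
  shows "(\<Sum>g\<in>GG k. F (phi i k g s)) = (\<Sum>g\<in>GG k. F (st i k g s))"
proof -
  have "(\<Sum>g\<in>GG k. F (phi i k g s)) = (\<Sum>g\<in>GG k. F (st i k (psi i k s g) s))"
    using phi_st[OF assms] by simp
  also have "\<dots> = (\<Sum>g\<in>GG k. F (st i k g s))"
    using sum.reindex_bij_betw[OF psi_bij[of i k s], of "\<lambda>g. F (st i k g s)"] by simp
  finally show ?thesis .
qed



lemma st_snd: "l < k \<Longrightarrow> snd (st i k g s) l = (snd s l)[i := snd g l]"
  unfolding st_def by simp

lemma st_fst: "fst (st i k g s) = (fst s)[i := fst g]"
  unfolding st_def by simp

lemma Ft_st:
  assumes s: "s \<in> DD n k" and i: "i < n" and k: "1 \<le> k"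
  shows "Ft n k e f (st i k (a, B) s) = (1 / 2 ^ n * (\<Prod>l<k. nwo e i (snd s l))) *
    (\<Sum>c\<in>UNIV. \<Prod>l<k. wt e (B l) * (if f ((xorv (fst s) (snd s l))[i := (a \<noteq> B l)]) = c then 1 else 0))"
proof -
  obtain x Z where sx: "s = (x, Z)" by (cases s)
  have x: "length x = n" and Z: "Z \<in> PiE {..<k} (\<lambda>_. cube n)" using s sx unfolding DD_def cube_def by auto
  have Zl: "\<And>l. l < k \<Longrightarrow> length (Z l) = n" using PiE_mem[OF Z] unfolding cube_def by simp
  define v where "v l = f ((xorv x (Z l))[i := (a \<noteq> B l)])" for l
  have P: "(\<Prod>l<k. noise_weight e (snd (st i k (a, B) s) l)) = (\<Prod>l<k. wt e (B l) * nwo e i (Z l))"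
    by (rule prod.cong[OF refl]) (simp add: st_snd sx nw_upd Zl i)
  have X: "\<And>l. l < k \<Longrightarrow> xorv (fst (st i k (a, B) s)) (snd (st i k (a, B) s) l) = (xorv x (Z l))[i := (a \<noteq> B l)]"
    by (simp add: st_snd st_fst sx xorv_upd Zl x i)
  have C: "(\<forall>l<k. \<forall>l'<k. f (xorv (fst (st i k (a, B) s)) (snd (st i k (a, B) s) l)) = f (xorv (fst (st i k (a, B) s)) (snd (st i k (a, B) s) l')))
      \<longleftrightarrow> (\<forall>l<k. \<forall>l'<k. v l = v l')"
    by (simp add: X v_def)
  have "Ft n k e f (st i k (a, B) s) = 1 / 2 ^ n * ((\<Prod>l<k. wt e (B l)) * (\<Prod>l<k. nwo e i (Z l))) *
        (if \<forall>l<k. \<forall>l'<k. v l = v l' then 1 else 0)"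
    unfolding Ft_def C P prod.distrib by simp
  also have "(if \<forall>l<k. \<forall>l'<k. v l = v l' then 1 else 0::real) = (\<Sum>c\<in>UNIV. \<Prod>l<k. (if v l = c then 1 else 0))"
    by (rule ind_sum[OF k])
  also have "1 / 2 ^ n * ((\<Prod>l<k. wt e (B l)) * (\<Prod>l<k. nwo e i (Z l))) * (\<Sum>c\<in>UNIV. \<Prod>l<k. (if v l = c then 1 else 0::real))
     = (1 / 2 ^ n * (\<Prod>l<k. nwo e i (Z l))) * (\<Sum>c\<in>UNIV. (\<Prod>l<k. wt e (B l)) * (\<Prod>l<k. (if v l = c then 1 else 0)))"
    by (simp add: sum_distrib_left sum_divide_distrib mult_ac)
  also have "\<dots> = (1 / 2 ^ n * (\<Prod>l<k. nwo e i (Z l))) * (\<Sum>c\<in>UNIV. \<Prod>l<k. wt e (B l) * (if v l = c then 1 else 0))"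
    by (simp add: prod.distrib)
  finally show ?thesis unfolding sx v_def by simp
qed

lemma orbit_formula:
  assumes s: "s \<in> DD n k" and i: "i < n" and k: "1 \<le> k"
  shows "(\<Sum>g\<in>GG k. Ft n k e f (st i k g s)) = (1 / 2 ^ n * (\<Prod>l<k. nwo e i (snd s l))) *
     (\<Sum>a\<in>UNIV. \<Sum>c\<in>UNIV. \<Prod>l<k. Aval e (\<lambda>\<beta>. f ((xorv (fst s) (snd s l))[i := \<beta>])) a c)"
proof -
  define K where "K = 1 / 2 ^ n * (\<Prod>l<k. nwo e i (snd s l))"
  define T where "T a c l \<beta> = wt e \<beta> * (if f ((xorv (fst s) (snd s l))[i := (a \<noteq> \<beta>)]) = c then 1 else (0::real))" for a c l \<beta>
  have "(\<Sum>g\<in>GG k. Ft n k e f (st i k g s)) = (\<Sum>a\<in>UNIV. \<Sum>B\<in>PiE {..<k} (\<lambda>_. UNIV). Ft n k e f (st i k (a, B) s))"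
    unfolding GG_def sum.cartesian_product by simp
  also have "\<dots> = (\<Sum>a\<in>UNIV. \<Sum>B\<in>PiE {..<k} (\<lambda>_. UNIV). K * (\<Sum>c\<in>UNIV. \<Prod>l<k. T a c l (B l)))"
    unfolding K_def T_def by (simp add: Ft_st[OF s i k])
  also have "\<dots> = (\<Sum>a\<in>UNIV. K * (\<Sum>c\<in>UNIV. \<Sum>B\<in>PiE {..<k} (\<lambda>_. UNIV). \<Prod>l<k. T a c l (B l)))"
    by (simp add: sum_distrib_left sum.swap[of _ "PiE {..<k} (\<lambda>_. UNIV)"])
  also have "\<dots> = (\<Sum>a\<in>UNIV. K * (\<Sum>c\<in>UNIV. \<Prod>l<k. \<Sum>\<beta>\<in>UNIV. T a c l \<beta>))"
    by (simp add: prod_sum_PiE)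
  also have "\<dots> = K * (\<Sum>a\<in>UNIV. \<Sum>c\<in>UNIV. \<Prod>l<k. Aval e (\<lambda>\<beta>. f ((xorv (fst s) (snd s l))[i := \<beta>])) a c)"
    unfolding T_def Aval_def by (simp add: sum_distrib_left)
  finally show ?thesis unfolding K_def .
qed



lemma shift_section: "i < length u \<Longrightarrow> (\<lambda>\<beta>. shift i f (u[i:=\<beta>])) = mon (\<lambda>\<beta>. f (u[i:=\<beta>]))"
  by (rule ext) (simp add: shift_def mon_def)

lemma shift_agree:
  assumes i: "i < n" and k: "1 \<le> k" and r0: "0 < rho" and r1: "rho < 1"
  shows "agree_prob n k rho f \<le> agree_prob n k rho (shift i f)"
proof -
  define e where "e = (1 - sqrt rho) / 2"
  have sq0: "0 \<le> sqrt rho" and sq1: "sqrt rho < 1" using r0 r1 by auto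
  have e0: "0 \<le> e" and e1: "e \<le> 1/2" unfolding e_def using sq0 sq1 by auto
  define S where "S f s = (\<Sum>a\<in>UNIV. \<Sum>c\<in>UNIV. \<Prod>l<k. Aval e (\<lambda>\<beta>. f ((xorv (fst s) (snd s l))[i := \<beta>])) a c)"
    for f :: "bool list \<Rightarrow> bool" and s :: "bool list \<times> (nat \<Rightarrow> bool list)"
  define K where "K s = 1 / 2 ^ n * (\<Prod>l<k. nwo e i (snd s l))" for s :: "bool list \<times> (nat \<Rightarrow> bool list)"
  have eq: "real (card (GG k)) * agree_prob n k rho g = (\<Sum>s\<in>DD n k. K s * S g s)" for g
  proof -
    have "real (card (GG k)) * agree_prob n k rho g = (\<Sum>s\<in>DD n k. \<Sum>x\<in>GG k. Ft n k e g (phi i k x s))"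
      unfolding agree_Ft e_def[symmetric] by (rule orbit_avg[OF GG_finite phi_bij[OF i]])
    also have "\<dots> = (\<Sum>s\<in>DD n k. \<Sum>x\<in>GG k. Ft n k e g (st i k x s))"
      by (rule sum.cong[OF refl]) (rule orbit_reindex)
    also have "\<dots> = (\<Sum>s\<in>DD n k. K s * S g s)"
      by (rule sum.cong[OF refl]) (simp add: orbit_formula[OF _ i k] K_def S_def)
    finally show ?thesis .
  qed
  have le: "K s * S f s \<le> K s * S (shift i f) s" if s: "s \<in> DD n k" for s
  proof (rule mult_left_mono)
    show "0 \<le> K s" unfolding K_def using e0 e1
      by (intro mult_nonneg_nonneg prod_nonneg nwo_nonneg) auto
    have len: "\<And>l. l < k \<Longrightarrow> i < length (xorv (fst s) (snd s l))"
    proof -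
      fix l assume "l < k"
      have ss: "fst s \<in> cube n" "snd s \<in> PiE {..<k} (\<lambda>_. cube n)" using s unfolding DD_def mem_Times_iff by blast+
      have "snd s l \<in> cube n" using PiE_mem[OF ss(2)] \<open>l < k\<close> by simp
      note this ss(1)
      hence "xorv (fst s) (snd s l) \<in> cube n" by (intro xorv_cube)
      thus "i < length (xorv (fst s) (snd s l))" using i unfolding cube_def by simp
    qed
    have "S (shift i f) s = (\<Sum>a\<in>UNIV. \<Sum>c\<in>UNIV. \<Prod>l<k. Aval e (mon (\<lambda>\<beta>. f ((xorv (fst s) (snd s l))[i := \<beta>]))) a c)"
      unfolding S_def by (intro sum.cong refl prod.cong) (simp add: shift_section len)
    thus "S f s \<le> S (shift i f) s"
      unfolding S_def using core_ineq[OF e0 e1, where k=k and h="\<lambda>l \<beta>. f ((xorv (fst s) (snd s l))[i := \<beta>])"] by simp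
  qed
  have "real (card (GG k)) * agree_prob n k rho f \<le> real (card (GG k)) * agree_prob n k rho (shift i f)"
    unfolding eq by (rule sum_mono) (rule le)
  thus ?thesis using GG_card_pos by simp
qed



primrec iter_shift :: "(bool list \<Rightarrow> bool) \<Rightarrow> nat \<Rightarrow> bool list \<Rightarrow> bool" where
  "iter_shift f 0 = f"
| "iter_shift f (Suc t) = shift t (iter_shift f t)"

lemma iter_props:
  assumes k: "1 \<le> k" and r0: "0 < rho" and r1: "rho < 1"
  shows "t \<le> n \<Longrightarrow> cube_mean n (iter_shift f t) = cube_mean n f \<and>
     agree_prob n k rho f \<le> agree_prob n k rho (iter_shift f t) \<and> (\<forall>j<t. mono_dir n j (iter_shift f t))"
proof (induction t)
  case 0
  then show ?case by simp
next
  case (Suc t)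
  hence t: "t < n" and IH: "cube_mean n (iter_shift f t) = cube_mean n f"
    "agree_prob n k rho f \<le> agree_prob n k rho (iter_shift f t)" "\<forall>j<t. mono_dir n j (iter_shift f t)"
    by auto
  have 1: "cube_mean n (iter_shift f (Suc t)) = cube_mean n f" using shift_mean[OF t] IH(1) by simp
  have 2: "agree_prob n k rho f \<le> agree_prob n k rho (iter_shift f (Suc t))"
    using IH(2) shift_agree[OF t k r0 r1, of "iter_shift f t"] by simp
  have 3: "\<forall>j<Suc t. mono_dir n j (iter_shift f (Suc t))"
  proof (intro allI impI)
    fix j assume "j < Suc t"
    show "mono_dir n j (iter_shift f (Suc t))"
    proof (cases "j = t")
      case True thus ?thesis using mono_dir_shift_same[OF t] by simp
    next
      case False
      hence "j < t" using \<open>j < Suc t\<close> by simp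
      thus ?thesis using mono_dir_shift_other[OF t _ _ IH(3)[rule_format, OF \<open>j < t\<close>]] False t by simp
    qed
  qed
  show ?case using 1 2 3 by blast
qed

lemma agree_cong:
  assumes "\<forall>x\<in>cube n. f x = g x"
  shows "agree_prob n k rho f = agree_prob n k rho g"
  unfolding agree_Ft
proof (rule sum.cong[OF refl])
  fix s assume s: "s \<in> DD n k"
  have ss: "fst s \<in> cube n" "snd s \<in> PiE {..<k} (\<lambda>_. cube n)" using s unfolding DD_def mem_Times_iff by blast+
  have H: "\<And>l. l < k \<Longrightarrow> f (xorv (fst s) (snd s l)) = g (xorv (fst s) (snd s l))"
  proof -
    fix l assume "l < k"
    hence "snd s l \<in> cube n" using PiE_mem[OF ss(2)] by simp
    hence "xorv (fst s) (snd s l) \<in> cube n" using ss(1) by (intro xorv_cube)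
    thus "f (xorv (fst s) (snd s l)) = g (xorv (fst s) (snd s l))" using assms by blast
  qed
  show "Ft n k ((1 - sqrt rho) / 2) f s = Ft n k ((1 - sqrt rho) / 2) g s"
    unfolding Ft_def by (simp add: H)
qed

lemma mean_cong:
  assumes "\<forall>x\<in>cube n. f x = g x"
  shows "cube_mean n f = cube_mean n g"
  unfolding cube_mean_def using assms by simp

lemma mean_set: "S \<subseteq> cube n \<Longrightarrow> cube_mean n (\<lambda>x. x \<in> S) = real (card S) / 2 ^ n"
proof -
  assume S: "S \<subseteq> cube n"
  have "(\<Sum>x\<in>cube n. (if x \<in> S then 1 else 0::real)) = (\<Sum>x\<in>cube n \<inter> S. 1)"
    by (rule sum.inter_restrict[symmetric]) (rule cube_finite)
  also have "cube n \<inter> S = S" using S by blast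
  finally show ?thesis unfolding cube_mean_def by simp
qed

theorem corollary2:
  fixes n k j :: nat and rho m :: real
  assumes "n \<ge> 1" and "k \<ge> 2" and "0 < rho" and "rho < 1"
    and "j \<le> 2 ^ n" and "m = real j / 2 ^ n"
  shows "\<exists>g. monotone_cube n g \<and> cube_mean n g = m \<and>
           (\<forall>f. cube_mean n f = m \<longrightarrow> agree_prob n k rho f \<le> agree_prob n k rho g)"
proof -
  have k1: "1 \<le> k" using assms(2) by simp
  define CS where "CS = {S. S \<subseteq> cube n \<and> cube_mean n (\<lambda>x. x \<in> S) = m}"
  define V where "V = (\<lambda>S. agree_prob n k rho (\<lambda>x. x \<in> S)) ` CS"
  have "CS \<subseteq> Pow (cube n)" unfolding CS_def by blast
  hence CSfin: "finite CS" by (rule finite_subset) (simp add: cube_finite)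
  have jc: "j \<le> card (cube n)" using assms(5) by (simp only: cube_card)
  obtain S0 where S0: "S0 \<subseteq> cube n" "card S0 = j"
    using obtain_subset_with_card_n[OF jc] by blast
  have "S0 \<in> CS" unfolding CS_def using S0 mean_set[OF S0(1)] assms(6) by simp
  hence Vne: "V \<noteq> {}" unfolding V_def by blast
  have Vfin: "finite V" unfolding V_def using CSfin by simp
  have "Max V \<in> V" by (rule Max_in[OF Vfin Vne])
  then obtain S1 where S1': "Max V = agree_prob n k rho (\<lambda>x. x \<in> S1)" "S1 \<in> CS"
    unfolding V_def by (rule imageE)
  have S1: "S1 \<in> CS" "agree_prob n k rho (\<lambda>x. x \<in> S1) = Max V" using S1' by simp_all
  define f0 where "f0 = (\<lambda>x. x \<in> S1)"
  define g where "g = iter_shift f0 n"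
  have P: "cube_mean n g = cube_mean n f0 \<and> agree_prob n k rho f0 \<le> agree_prob n k rho g \<and> (\<forall>j<n. mono_dir n j g)"
    unfolding g_def by (rule iter_props[OF k1 assms(3) assms(4)]) simp
  have m0: "cube_mean n f0 = m" using S1(1) unfolding CS_def f0_def by simp
  show ?thesis
  proof (intro exI conjI allI impI)
    show "monotone_cube n g" using P mono_dirs_imp by blast
    show "cube_mean n g = m" using P m0 by simp
    fix f assume mf: "cube_mean n f = m"
    define S where "S = {x \<in> cube n. f x}"
    have eqf: "\<forall>x\<in>cube n. f x = (x \<in> S)" unfolding S_def by simp
    have "S \<in> CS" unfolding CS_def using mean_cong[OF eqf] mf S_def by auto
    hence "agree_prob n k rho (\<lambda>x. x \<in> S) \<in> V" unfolding V_def by blast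
    hence "agree_prob n k rho (\<lambda>x. x \<in> S) \<le> Max V" using Vfin by simp
    also have "\<dots> = agree_prob n k rho f0" using S1 f0_def by simp
    also have "\<dots> \<le> agree_prob n k rho g" using P by simp
    finally show "agree_prob n k rho f \<le> agree_prob n k rho g" using agree_cong[OF eqf] by simp
  qed
qed

end
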